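(* Let $N\ge1$, $K>0$, $r_1,\dots,r_N>0$, let $(\mu_{ij})$ be a nonnegative, symmetric, irreducible $N\times N$ matrix, and let $\bar v$ be the unique positive stationary solution of $$\frac{dv_i}{dt}=v_i\left[r_i-\frac{1}{K}\sum_{j=1}^Nr_jv_j\right]+\sum_{j=1}^N\mu_{ij}(v_j-v_i),\qquad i=1,\dots,N.$$ Let $\bar v^\perp=\{h\in\mathbb{R}^N:\sum_ih_i\bar v_i=0\}$ and $\mathcal{E}(h)=\sum_ih_i^2$. Then there exists $C_1>0$ such that for all $h\in\bar v^\perp$, $$C_1\mathcal{E}(h)\le\sum_{i,j=1}^N\mu_{ij}\bar v_i\bar v_j\left(\frac{h_i}{\bar v_i}-\frac{h_j}{\bar v_j}\right)^2.$$ Moreover, this holds with $C_1=\lambda_2$, where $\lambda_2$ is the smallest strictly positive eigenvalue $\lambda$ of the linear eigenvalue problem $$h_i\sum_{j=1}^N\mu_{ij}\frac{\bar v_j}{\bar v_i}-\sum_{j=1}^N\mu_{ij}h_j=\lambda h_i,\qquad i=1,\dots,N.$$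
   Context: A stationary solution is a vector at which the right-hand side vanishes for every $i$; positive means all components strictly positive. *)

theory Defs
  imports "HOL-Analysis.Analysis"
begin

text \<open>Indices are the elements of a finite type 'n, so N = CARD('n) \<ge> 1.\<close>

text \<open>Irreducible square matrix: there is no nonempty proper index set I with
  \<mu> i j = 0 for all i \<in> I, j \<notin> I (equivalently, no permutation brings the
  matrix into block upper triangular form).\<close>
definition irreducible_mat :: "real^'n^'n \<Rightarrow> bool" where
  "irreducible_mat \<mu> \<longleftrightarrow>
     (\<forall>I :: 'n set. I \<noteq> {} \<and> I \<noteq> UNIV \<longrightarrow> (\<exists>i\<in>I. \<exists>j. j \<notin> I \<and> \<mu>$i$j \<noteq> 0))"

definition stationary :: "real \<Rightarrow> real^'n \<Rightarrow> real^'n^'n \<Rightarrow> real^'n \<Rightarrow> bool" where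
  "stationary K r \<mu> v \<longleftrightarrow>
     (\<forall>i. v$i * (r$i - (1/K) * (\<Sum>j\<in>UNIV. r$j * v$j)) + (\<Sum>j\<in>UNIV. \<mu>$i$j * (v$j - v$i)) = 0)"

definition eig_op :: "real^'n^'n \<Rightarrow> real^'n \<Rightarrow> real^'n \<Rightarrow> real^'n" where
  "eig_op \<mu> v h = (\<chi> i. h$i * (\<Sum>j\<in>UNIV. \<mu>$i$j * (v$j / v$i)) - (\<Sum>j\<in>UNIV. \<mu>$i$j * h$j))"

definition is_eigenvalue :: "real^'n^'n \<Rightarrow> real^'n \<Rightarrow> real \<Rightarrow> bool" where
  "is_eigenvalue \<mu> v lam \<longleftrightarrow> (\<exists>h. h \<noteq> 0 \<and> eig_op \<mu> v h = lam *\<^sub>R h)"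

definition smallest_pos_eigenvalue :: "real^'n^'n \<Rightarrow> real^'n \<Rightarrow> real \<Rightarrow> bool" where
  "smallest_pos_eigenvalue \<mu> v lam2 \<longleftrightarrow>
     lam2 > 0 \<and> is_eigenvalue \<mu> v lam2 \<and> (\<forall>lam. lam > 0 \<and> is_eigenvalue \<mu> v lam \<longrightarrow> lam2 \<le> lam)"

definition energy :: "real^'n \<Rightarrow> real" where
  "energy h = (\<Sum>i\<in>UNIV. (h$i)\<^sup>2)"

definition dirichlet :: "real^'n^'n \<Rightarrow> real^'n \<Rightarrow> real^'n \<Rightarrow> real" where
  "dirichlet \<mu> v h = (\<Sum>i\<in>UNIV. \<Sum>j\<in>UNIV. \<mu>$i$j * v$i * v$j * (h$i / v$i - h$j / v$j)\<^sup>2)"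

end

theory Submission
  imports Defs
begin

lemma eig_lin: "eig_op \<mu> v (a *\<^sub>R x + b *\<^sub>R y) = a *\<^sub>R eig_op \<mu> v x + b *\<^sub>R eig_op \<mu> v y"
  by (simp add: eig_op_def vec_eq_iff algebra_simps sum.distrib sum_distrib_left add_divide_distrib)

lemma eig_linear: "linear (eig_op \<mu> v)"
proof -
  have "eig_op \<mu> v (x + y) = eig_op \<mu> v x + eig_op \<mu> v y" for x y
    using eig_lin[of \<mu> v 1 x 1 y] by simp
  moreover have "eig_op \<mu> v (c *\<^sub>R x) = c *\<^sub>R eig_op \<mu> v x" for c x
    using eig_lin[of \<mu> v c x 0 x] by simp
  ultimately show ?thesis by (intro linearI) auto
qed

lemma eig_sym:
  assumes sym: "\<forall>i j. \<mu>$i$j = \<mu>$j$i"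
  shows "inner (eig_op \<mu> v x) y = inner x (eig_op \<mu> v y)"
proof -
  define d where "d i = (\<Sum>j\<in>UNIV. \<mu>$i$j * (v$j / v$i))" for i
  have e: "(\<Sum>i\<in>UNIV. \<Sum>j\<in>UNIV. \<mu>$i$j * x$j * y$i) = (\<Sum>i\<in>UNIV. \<Sum>j\<in>UNIV. \<mu>$i$j * y$j * x$i)"
    by (subst sum.swap) (simp add: sym mult.commute mult.left_commute)
  have "inner (eig_op \<mu> v x) y = (\<Sum>i\<in>UNIV. x$i * y$i * d i) - (\<Sum>i\<in>UNIV. \<Sum>j\<in>UNIV. \<mu>$i$j * x$j * y$i)"
    by (simp add: eig_op_def inner_vec_def d_def algebra_simps sum_subtractf sum_distrib_left sum_distrib_right)
  moreover have "inner x (eig_op \<mu> v y) = (\<Sum>i\<in>UNIV. x$i * y$i * d i) - (\<Sum>i\<in>UNIV. \<Sum>j\<in>UNIV. \<mu>$i$j * y$j * x$i)"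
    by (simp add: eig_op_def inner_vec_def d_def algebra_simps sum_subtractf sum_distrib_left sum_distrib_right)
  ultimately show ?thesis using e by simp
qed

lemma eig_v:
  assumes "\<forall>i. v$i > 0"
  shows "eig_op \<mu> v v = 0"
proof -
  have "v$i * (\<Sum>j\<in>UNIV. \<mu>$i$j * (v$j / v$i)) = (\<Sum>j\<in>UNIV. \<mu>$i$j * v$j)" for i
    using assms[rule_format, of i] by (simp add: sum_distrib_left field_simps)
  then show ?thesis by (simp add: eig_op_def vec_eq_iff)
qed

lemma dir_eq:
  assumes sym: "\<forall>i j. \<mu>$i$j = \<mu>$j$i" and pos: "\<forall>i. v$i > 0"
  shows "dirichlet \<mu> v h = 2 * inner (eig_op \<mu> v h) h"
proof -
  have t: "\<mu>$i$j * v$i * v$j * (h$i / v$i - h$j / v$j)\<^sup>2 =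
     \<mu>$i$j * (h$i)\<^sup>2 * (v$j / v$i) - 2 * (\<mu>$i$j * h$j * h$i) + \<mu>$i$j * (h$j)\<^sup>2 * (v$i / v$j)" for i j
    using pos[rule_format, of i] pos[rule_format, of j]
    by (simp add: field_simps power2_eq_square)
  have s: "(\<Sum>i\<in>UNIV. \<Sum>j\<in>UNIV. \<mu>$i$j * (h$j)\<^sup>2 * (v$i / v$j)) = (\<Sum>i\<in>UNIV. \<Sum>j\<in>UNIV. \<mu>$i$j * (h$i)\<^sup>2 * (v$j / v$i))"
    by (subst sum.swap) (simp add: sym)
  have "dirichlet \<mu> v h = 2 * (\<Sum>i\<in>UNIV. \<Sum>j\<in>UNIV. \<mu>$i$j * (h$i)\<^sup>2 * (v$j / v$i)) - 2 * (\<Sum>i\<in>UNIV. \<Sum>j\<in>UNIV. \<mu>$i$j * h$j * h$i)"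
    unfolding dirichlet_def t sum.distrib sum_subtractf sum_distrib_left[symmetric] s by simp
  also have "\<dots> = 2 * inner (eig_op \<mu> v h) h"
    by (simp add: eig_op_def inner_vec_def algebra_simps sum_subtractf sum_distrib_left sum_distrib_right power2_eq_square)
  finally show ?thesis .
qed

lemma dir_nonneg:
  assumes "\<forall>i j. \<mu>$i$j \<ge> 0" "\<forall>i. v$i > 0"
  shows "dirichlet \<mu> v h \<ge> 0"
  unfolding dirichlet_def using assms by (intro sum_nonneg mult_nonneg_nonneg) (auto intro: less_imp_le)

lemma dir_pos:
  assumes nn: "\<forall>i j. \<mu>$i$j \<ge> 0" and pos: "\<forall>i. v$i > 0" and irr: "irreducible_mat \<mu>"
    and hv: "inner h v = 0" and h0: "h \<noteq> 0"
  shows "dirichlet \<mu> v h > 0"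
proof (rule ccontr)
  assume "\<not> ?thesis"
  with dir_nonneg[OF nn pos, of h] have z: "dirichlet \<mu> v h = 0" by simp
  have T: "0 \<le> \<mu>$i$j * v$i * v$j * (h$i / v$i - h$j / v$j)\<^sup>2" for i j
    using nn pos by (intro mult_nonneg_nonneg) (auto simp: less_imp_le)
  have T2: "0 \<le> (\<Sum>j\<in>UNIV. \<mu>$i$j * v$i * v$j * (h$i / v$i - h$j / v$j)\<^sup>2)" for i
    using T by (intro sum_nonneg) auto
  have "(\<Sum>j\<in>UNIV. \<mu>$i$j * v$i * v$j * (h$i / v$i - h$j / v$j)\<^sup>2) = 0" for i
    using z sum_nonneg_eq_0_iff[THEN iffD1, of UNIV, OF _ _ z[unfolded dirichlet_def]] T2 by auto
  then have "\<mu>$i$j * v$i * v$j * (h$i / v$i - h$j / v$j)\<^sup>2 = 0" for i j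
    using sum_nonneg_eq_0_iff[of UNIV "\<lambda>j. \<mu>$i$j * v$i * v$j * (h$i / v$i - h$j / v$j)\<^sup>2"] T by auto
  then have E: "\<mu>$i$j \<noteq> 0 \<Longrightarrow> h$i / v$i = h$j / v$j" for i j
  proof -
    assume m: "\<mu>$i$j \<noteq> 0"
    have "\<mu>$i$j * v$i * v$j * (h$i / v$i - h$j / v$j)\<^sup>2 = 0" by fact
    with m pos[rule_format, of i] pos[rule_format, of j] show ?thesis by simp
  qed
  obtain i0 :: 'a where True by simp
  define c where "c = h$i0 / v$i0"
  define I where "I = {i. h$i / v$i = c}"
  have "I = UNIV"
  proof (rule ccontr)
    assume "I \<noteq> UNIV"
    moreover have "I \<noteq> {}" using c_def I_def by auto
    ultimately obtain i j where "i \<in> I" "j \<notin> I" "\<mu>$i$j \<noteq> 0"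
      using irr unfolding irreducible_mat_def by blast
    then show False using E I_def by auto
  qed
  then have hc: "h$i = c * v$i" for i
  proof -
    assume "I = UNIV"
    then have "h$i / v$i = c" unfolding I_def by blast
    with pos[rule_format, of i] show ?thesis by (simp add: field_simps)
  qed
  have "inner h v = c * (\<Sum>i\<in>UNIV. (v$i)\<^sup>2)"
    by (simp add: inner_vec_def hc sum_distrib_left power2_eq_square mult.assoc)
  moreover have "(\<Sum>i\<in>UNIV. (v$i)\<^sup>2) > 0"
    using pos by (intro sum_pos) (auto, metis less_irrefl)
  ultimately have "c = 0" using hv by simp
  then have "h = 0" using hc by (simp add: vec_eq_iff)
  with h0 show False by simp
qed

lemma energy_inner: "energy h = inner h h"
  by (simp add: energy_def inner_vec_def power2_eq_square)

theorem lemma5p3: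
  fixes K :: real and r :: "real^'n" and \<mu> :: "real^'n^'n" and v :: "real^'n"
  assumes "K > 0"
    and "\<forall>i. r$i > 0"
    and nn: "\<forall>i j. \<mu>$i$j \<ge> 0"
    and sym: "\<forall>i j. \<mu>$i$j = \<mu>$j$i"
    and irr: "irreducible_mat \<mu>"
    and pos: "\<forall>i. v$i > 0"
    and "stationary K r \<mu> v"
  shows "(\<exists>C1 > 0. \<forall>h. (\<Sum>i\<in>UNIV. h$i * v$i) = 0 \<longrightarrow> C1 * energy h \<le> dirichlet \<mu> v h)
    \<and> (\<forall>lam2. smallest_pos_eigenvalue \<mu> v lam2 \<longrightarrow>
         (\<forall>h. (\<Sum>i\<in>UNIV. h$i * v$i) = 0 \<longrightarrow> lam2 * energy h \<le> dirichlet \<mu> v h))"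
proof -
  define A where "A = eig_op \<mu> v"
  have sumeq: "(\<Sum>i\<in>UNIV. h$i * v$i) = inner h v" for h by (simp add: inner_vec_def)
  have dn: "dirichlet \<mu> v h \<ge> 0" for h using dir_nonneg[OF nn pos] .
  have de: "dirichlet \<mu> v h = 2 * inner (A h) h" for h using dir_eq[OF sym pos] A_def by simp
  show ?thesis
  proof (cases "\<forall>h. inner h v = 0 \<longrightarrow> h = 0")
    case True
    then have "inner h v = 0 \<Longrightarrow> c * energy h \<le> dirichlet \<mu> v h" for h c
      using dn[of h] by (auto simp: energy_def)
    then show ?thesis unfolding sumeq by (auto intro: exI[of _ 1])
  next
    case False
    then obtain h1 where h1: "inner h1 v = 0" "h1 \<noteq> 0" by auto
    define S where "S = {h. inner v h = 0} \<inter> sphere 0 1"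
    have cS: "compact S" unfolding S_def
      by (intro closed_Int_compact closed_hyperplane compact_sphere)
    have "h1 /\<^sub>R norm h1 \<in> S" using h1 by (simp add: S_def inner_commute)
    then have neS: "S \<noteq> {}" by blast
    have linA: "linear A" unfolding A_def by (rule eig_linear)
    have contA: "continuous_on S A"
      by (rule linear_continuous_on) (use linA linear_conv_bounded_linear in blast)
    have "continuous_on S (\<lambda>h. 2 * inner (A h) h)"
      by (intro continuous_intros contA)
    from continuous_attains_inf[OF cS neS this] obtain h0 where
      h0S: "h0 \<in> S" and h0min: "\<And>y. y \<in> S \<Longrightarrow> 2 * inner (A h0) h0 \<le> 2 * inner (A y) y" by blast
    define m where "m = 2 * inner (A h0) h0"
    have h0v: "inner h0 v = 0" and nh0: "norm h0 = 1" using h0S by (auto simp: S_def inner_commute)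
    then have h0nz: "h0 \<noteq> 0" by auto
    have mpos: "m > 0" using dir_pos[OF nn pos irr h0v h0nz] de m_def by simp
    have Ascale: "A (c *\<^sub>R x) = c *\<^sub>R A x" for c x using linA by (simp add: linear_scale)
    have Aadd: "A (x + y) = A x + A y" for x y using linA by (simp add: linear_add)
    have claim1: "m * energy h \<le> dirichlet \<mu> v h" if hv: "inner h v = 0" for h
    proof (cases "h = 0")
      case True then show ?thesis using dn[of h] by (simp add: energy_def)
    next
      case False
      define u where "u = h /\<^sub>R norm h"
      have "u \<in> S" using hv False by (simp add: S_def u_def inner_commute)
      then have "m \<le> 2 * inner (A u) u" using h0min m_def by blast
      also have "2 * inner (A u) u = 2 * inner (A h) h / (norm h)\<^sup>2"
        unfolding u_def Ascale by (simp add: power2_eq_square field_simps)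
      finally have "m * (norm h)\<^sup>2 \<le> 2 * inner (A h) h"
        using False by (simp add: field_simps)
      then show ?thesis using de[of h] by (simp add: energy_inner power2_norm_eq_inner)
    qed
    define w where "w = A h0 - (m/2) *\<^sub>R h0"
    have Av: "A v = 0" unfolding A_def by (rule eig_v[OF pos])
    have Asym: "inner (A x) y = inner x (A y)" for x y unfolding A_def by (rule eig_sym[OF sym])
    have wv: "inner w v = 0"
      unfolding w_def using h0v by (simp add: inner_diff_left Asym Av)
    define a where "a = inner w w"
    define q where "q = 2 * inner (A w) w - m * a"
    have ineq: "0 \<le> 4 * t * a + t\<^sup>2 * q" for t
    proof -
      have "inner (h0 + t *\<^sub>R w) v = 0" using h0v wv by (simp add: inner_add_left)
      from claim1[OF this] have F1:
        "m * inner (h0 + t *\<^sub>R w) (h0 + t *\<^sub>R w) \<le> 2 * inner (A (h0 + t *\<^sub>R w)) (h0 + t *\<^sub>R w)"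
        by (simp add: energy_inner de)
      have F2: "inner (h0 + t *\<^sub>R w) (h0 + t *\<^sub>R w) = 1 + 2 * t * inner h0 w + t\<^sup>2 * a"
      proof -
        have hh: "inner h0 h0 = 1" using nh0 by (simp add: power2_norm_eq_inner[symmetric])
        show ?thesis
          unfolding inner_add_left inner_add_right inner_scaleR_left inner_scaleR_right
          by (simp only: hh inner_commute[of w h0] a_def[symmetric]) (simp add: algebra_simps power2_eq_square)
      qed
      have F3: "inner (A (h0 + t *\<^sub>R w)) (h0 + t *\<^sub>R w) =
          m/2 + 2 * t * inner (A h0) w + t\<^sup>2 * inner (A w) w"
        using Asym[of h0 w] by (simp add: Aadd Ascale inner_add_left inner_add_right m_def power2_eq_square Asym[of w h0] inner_commute)
      have F4: "inner (A h0) w = a + (m/2) * inner h0 w"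
      proof -
        have "A h0 = w + (m/2) *\<^sub>R h0" using w_def by simp
        then show ?thesis unfolding a_def by (simp add: inner_add_left inner_add_right inner_commute)
      qed
      have G: "m * (1 + 2 * t * inner h0 w + t\<^sup>2 * a) \<le> 2 * (m/2 + 2 * t * (a + (m/2) * inner h0 w) + t\<^sup>2 * inner (A w) w)"
        using F1 unfolding F2 F3 F4 .
      have "4 * t * a + t\<^sup>2 * q = 2 * (m/2 + 2 * t * (a + (m/2) * inner h0 w) + t\<^sup>2 * inner (A w) w) - m * (1 + 2 * t * inner h0 w + t\<^sup>2 * a)"
        unfolding q_def by (simp add: algebra_simps)
      with G show ?thesis by linarith
    qed
    have "a = 0"
    proof (rule ccontr)
      assume "a \<noteq> 0"
      then have apos: "a > 0" unfolding a_def by simp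
      define s where "s = a / (\<bar>q\<bar> + 1)"
      have spos: "s > 0" using apos by (simp add: s_def add_pos_nonneg)
      have "0 \<le> 4 * (-s) * a + (-s)\<^sup>2 * q" by (rule ineq)
      then have "s * (4 * a) \<le> s * (s * q)" by (simp add: algebra_simps power2_eq_square)
      then have "4 * a \<le> s * q" using spos by simp
      also have "s * q \<le> s * \<bar>q\<bar>" using spos by (simp add: mult_left_mono)
      also have "s * \<bar>q\<bar> < a" using apos by (simp add: s_def field_simps)
      finally show False using apos by simp
    qed
    then have "w = 0" unfolding a_def by simp
    then have eig: "eig_op \<mu> v h0 = (m/2) *\<^sub>R h0" unfolding w_def A_def by simp
    have iseig: "is_eigenvalue \<mu> v (m/2)" unfolding is_eigenvalue_def using eig h0nz by blast
    show ?thesis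
    proof
      show "\<exists>C1>0. \<forall>h. (\<Sum>i\<in>UNIV. h$i * v$i) = 0 \<longrightarrow> C1 * energy h \<le> dirichlet \<mu> v h"
        using mpos claim1 unfolding sumeq by blast
    next
      show "\<forall>lam2. smallest_pos_eigenvalue \<mu> v lam2 \<longrightarrow>
         (\<forall>h. (\<Sum>i\<in>UNIV. h$i * v$i) = 0 \<longrightarrow> lam2 * energy h \<le> dirichlet \<mu> v h)"
      proof (intro allI impI)
        fix lam2 h assume sp: "smallest_pos_eigenvalue \<mu> v lam2" and hv: "(\<Sum>i\<in>UNIV. h$i * v$i) = 0"
        have "lam2 \<le> m/2" using sp iseig mpos unfolding smallest_pos_eigenvalue_def by (meson half_gt_zero)
        then have "lam2 \<le> m" using mpos by simp
        moreover have "energy h \<ge> 0" unfolding energy_def by (simp add: sum_nonneg)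
        ultimately have "lam2 * energy h \<le> m * energy h" by (simp add: mult_right_mono)
        also have "\<dots> \<le> dirichlet \<mu> v h" using claim1 hv sumeq by simp
        finally show "lam2 * energy h \<le> dirichlet \<mu> v h" .
      qed
    qed
  qed
qed

end
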